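(* Let $X$ be a separated metric compact Hausdorff space. A binary continuous submetric $\gamma$ on $X$ is symmetric if and only if $\gamma((x,i),(y,j))=\gamma((x,1-i),(y,1-j))$ for all $x,y\in X$ and $i,j\in\{0,1\}$.
   Context: A metric on a set $X$ is a map $d\colon X\times X\to[0,\infty]$ with $d(x,x)=0$ and $d(x,z)\le d(x,y)+d(y,z)$ (not necessarily symmetric, $\infty$ allowed); separated means $d(x,y)=0=d(y,x)$ implies $x=y$. A separated metric compact Hausdorff space is a compact Hausdorff space with a separated metric continuous $X\times X\to[0,\infty]$ for the upper topology on $[0,\infty]$ (open sets $]u,\infty]$); morphisms are continuous non-expansive maps. $X+X$ is the coproduct with elements $(x,i)$, $i\in\{0,1\}$, coproduct topology and metric $d((x,i),(y,i))=d(x,y)$, $d((x,i),(y,1-i))=\infty$. A binary continuous submetric on $X$ is a (not necessarily separated) metric $\gamma$ on $X+X$, continuous for the upper topology, below the coproduct metric. Its associated corelation is $\binom{q_0}{q_1}\colon X+X\to S:=(X+X)/{\sim_\gamma}$ where $u\sim_\gamma v$ iff $\gamma(u,v)=\gamma(v,u)=0$, $S$ has quotient topology and metric $([u],[v])\mapsto\gamma(u,v)$, $q_i(x)=[(x,i)]$. $\gamma$ is symmetric if there is a continuous non-expansive $s\colon S\to S$ with $s\circ q_0=q_1$ and $s\circ q_1=q_0$. *)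

theory Defs
  imports "HOL-Analysis.Analysis" "HOL-Library.Extended_Nonnegative_Real"
begin

text \<open>The two summands of X+X are
  indexed by bool: False stands for 0, True for 1, and 1-i is \<not> i.\<close>

definition is_metric_on :: "'a set \<Rightarrow> ('a \<Rightarrow> 'a \<Rightarrow> ennreal) \<Rightarrow> bool" where
  "is_metric_on A d \<longleftrightarrow> (\<forall>x\<in>A. d x x = 0) \<and>
     (\<forall>x\<in>A. \<forall>y\<in>A. \<forall>z\<in>A. d x z \<le> d x y + d y z)"

definition separated_on :: "'a set \<Rightarrow> ('a \<Rightarrow> 'a \<Rightarrow> ennreal) \<Rightarrow> bool" where
  "separated_on A d \<longleftrightarrow> (\<forall>x\<in>A. \<forall>y\<in>A. d x y = 0 \<and> d y x = 0 \<longrightarrow> x = y)"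

text \<open>Continuity into [0,\<infinity>] with the upper topology (open sets ]u,\<infinity>]).\<close>
definition upper_continuous :: "'a topology \<Rightarrow> ('a \<Rightarrow> ennreal) \<Rightarrow> bool" where
  "upper_continuous T f \<longleftrightarrow> (\<forall>u. openin T {z \<in> topspace T. u < f z})"

definition sep_metric_CH :: "'a topology \<Rightarrow> ('a \<Rightarrow> 'a \<Rightarrow> ennreal) \<Rightarrow> bool" where
  "sep_metric_CH X d \<longleftrightarrow> compact_space X \<and> Hausdorff_space X \<and>
     is_metric_on (topspace X) d \<and> separated_on (topspace X) d \<and>
     upper_continuous (prod_topology X X) (case_prod d)"

definition coprod_top :: "'a topology \<Rightarrow> (bool \<times> 'a) topology" where
  "coprod_top X = sum_topology (\<lambda>_. X) UNIV"

definition coprod_metric :: "('a \<Rightarrow> 'a \<Rightarrow> ennreal) \<Rightarrow> (bool \<times> 'a) \<Rightarrow> (bool \<times> 'a) \<Rightarrow> ennreal" where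
  "coprod_metric d u v = (if fst u = fst v then d (snd u) (snd v) else \<infinity>)"

definition binary_cont_submetric ::
  "'a topology \<Rightarrow> ('a \<Rightarrow> 'a \<Rightarrow> ennreal) \<Rightarrow> ((bool \<times> 'a) \<Rightarrow> (bool \<times> 'a) \<Rightarrow> ennreal) \<Rightarrow> bool" where
  "binary_cont_submetric X d \<gamma> \<longleftrightarrow>
     is_metric_on (topspace (coprod_top X)) \<gamma> \<and>
     upper_continuous (prod_topology (coprod_top X) (coprod_top X)) (case_prod \<gamma>) \<and>
     (\<forall>u\<in>topspace (coprod_top X). \<forall>v\<in>topspace (coprod_top X). \<gamma> u v \<le> coprod_metric d u v)"

definition quotient_topology :: "'a topology \<Rightarrow> ('a \<Rightarrow> 'b) \<Rightarrow> 'b set \<Rightarrow> 'b topology" where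
  "quotient_topology T f S = topology (\<lambda>U. U \<subseteq> S \<and> openin T {x \<in> topspace T. f x \<in> U})"

lemma istopology_quotient:
  "istopology (\<lambda>U. U \<subseteq> S \<and> openin T {x \<in> topspace T. f x \<in> U})"
proof -
  have i: "{x \<in> topspace T. f x \<in> A \<inter> B} = {x \<in> topspace T. f x \<in> A} \<inter> {x \<in> topspace T. f x \<in> B}" for A B
    by auto
  have u: "{x \<in> topspace T. f x \<in> \<Union>K} = \<Union>((\<lambda>U. {x \<in> topspace T. f x \<in> U}) ` K)" for K
    by auto
  show ?thesis unfolding istopology_def
    by (auto simp only: i u intro!: openin_Int openin_Union)
qed

definition gcls :: "'a topology \<Rightarrow> ((bool \<times> 'a) \<Rightarrow> (bool \<times> 'a) \<Rightarrow> ennreal) \<Rightarrow> bool \<times> 'a \<Rightarrow> (bool \<times> 'a) set" where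
  "gcls X \<gamma> u = {v \<in> topspace (coprod_top X). \<gamma> u v = 0 \<and> \<gamma> v u = 0}"

definition corel_set :: "'a topology \<Rightarrow> ((bool \<times> 'a) \<Rightarrow> (bool \<times> 'a) \<Rightarrow> ennreal) \<Rightarrow> (bool \<times> 'a) set set" where
  "corel_set X \<gamma> = gcls X \<gamma> ` topspace (coprod_top X)"

definition corel_top :: "'a topology \<Rightarrow> ((bool \<times> 'a) \<Rightarrow> (bool \<times> 'a) \<Rightarrow> ennreal) \<Rightarrow> (bool \<times> 'a) set topology" where
  "corel_top X \<gamma> = quotient_topology (coprod_top X) (gcls X \<gamma>) (corel_set X \<gamma>)"

definition corel_metric :: "((bool \<times> 'a) \<Rightarrow> (bool \<times> 'a) \<Rightarrow> ennreal) \<Rightarrow> (bool \<times> 'a) set \<Rightarrow> (bool \<times> 'a) set \<Rightarrow> ennreal" where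
  "corel_metric \<gamma> A B = \<gamma> (SOME u. u \<in> A) (SOME v. v \<in> B)"

definition corel_q :: "'a topology \<Rightarrow> ((bool \<times> 'a) \<Rightarrow> (bool \<times> 'a) \<Rightarrow> ennreal) \<Rightarrow> bool \<Rightarrow> 'a \<Rightarrow> (bool \<times> 'a) set" where
  "corel_q X \<gamma> i x = gcls X \<gamma> (i, x)"

definition symmetric_submetric :: "'a topology \<Rightarrow> ((bool \<times> 'a) \<Rightarrow> (bool \<times> 'a) \<Rightarrow> ennreal) \<Rightarrow> bool" where
  "symmetric_submetric X \<gamma> \<longleftrightarrow>
     (\<exists>s. continuous_map (corel_top X \<gamma>) (corel_top X \<gamma>) s \<and>
          (\<forall>A\<in>corel_set X \<gamma>. \<forall>B\<in>corel_set X \<gamma>.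
              corel_metric \<gamma> (s A) (s B) \<le> corel_metric \<gamma> A B) \<and>
          (\<forall>x\<in>topspace X. s (corel_q X \<gamma> False x) = corel_q X \<gamma> True x \<and>
                           s (corel_q X \<gamma> True x) = corel_q X \<gamma> False x))"

end

theory Submission
  imports Defs
begin

lemma openin_quot:
  "openin (quotient_topology T f S) U \<longleftrightarrow> U \<subseteq> S \<and> openin T {x \<in> topspace T. f x \<in> U}"
  unfolding quotient_topology_def
  by (simp add: topology_inverse'[OF istopology_quotient])

lemma topspace_quot:
  assumes "f ` topspace T \<subseteq> S"
  shows "topspace (quotient_topology T f S) = S"
proof -
  have "{x \<in> topspace T. f x \<in> S} = topspace T" using assms by auto
  hence "openin (quotient_topology T f S) S" by (simp add: openin_quot)
  hence "S \<subseteq> topspace (quotient_topology T f S)" by (rule openin_subset)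
  moreover have "topspace (quotient_topology T f S) \<subseteq> S"
    unfolding topspace_def by (auto simp: openin_quot)
  ultimately show ?thesis by blast
qed

lemma top_coprod: "topspace (coprod_top X) = UNIV \<times> topspace X"
  by (auto simp: coprod_top_def)

lemma gcls_self:
  assumes "is_metric_on (topspace (coprod_top X)) \<gamma>" "u \<in> topspace (coprod_top X)"
  shows "u \<in> gcls X \<gamma> u"
  using assms by (auto simp: gcls_def is_metric_on_def)

lemma corel_metric_gcls:
  assumes m: "is_metric_on (topspace (coprod_top X)) \<gamma>"
    and u: "u \<in> topspace (coprod_top X)" and v: "v \<in> topspace (coprod_top X)"
  shows "corel_metric \<gamma> (gcls X \<gamma> u) (gcls X \<gamma> v) = \<gamma> u v"
proof -
  define u' where "u' = (SOME w. w \<in> gcls X \<gamma> u)"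
  define v' where "v' = (SOME w. w \<in> gcls X \<gamma> v)"
  have "u' \<in> gcls X \<gamma> u" unfolding u'_def using gcls_self[OF m u] by (rule someI)
  hence u1: "u' \<in> topspace (coprod_top X)" "\<gamma> u u' = 0" "\<gamma> u' u = 0" by (auto simp: gcls_def)
  have "v' \<in> gcls X \<gamma> v" unfolding v'_def using gcls_self[OF m v] by (rule someI)
  hence v1: "v' \<in> topspace (coprod_top X)" "\<gamma> v v' = 0" "\<gamma> v' v = 0" by (auto simp: gcls_def)
  have tri: "\<And>a b c. a \<in> topspace (coprod_top X) \<Longrightarrow> b \<in> topspace (coprod_top X) \<Longrightarrow>
     c \<in> topspace (coprod_top X) \<Longrightarrow> \<gamma> a c \<le> \<gamma> a b + \<gamma> b c"
    using m unfolding is_metric_on_def by blast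
  have "\<gamma> u' v' \<le> \<gamma> u' u + \<gamma> u v'" using tri u1 u v1 by blast
  also have "\<gamma> u v' \<le> \<gamma> u v + \<gamma> v v'" using tri u v v1 by blast
  finally have a: "\<gamma> u' v' \<le> \<gamma> u v" using u1 v1 by simp
  have "\<gamma> u v \<le> \<gamma> u u' + \<gamma> u' v" using tri u1 u v by blast
  also have "\<gamma> u' v \<le> \<gamma> u' v' + \<gamma> v' v" using tri u1 v v1 by blast
  finally have b: "\<gamma> u v \<le> \<gamma> u' v'" using u1 v1 by simp
  show ?thesis unfolding corel_metric_def u'_def[symmetric] v'_def[symmetric]
    using a b by (rule antisym)
qed

definition flp :: "bool \<times> 'a \<Rightarrow> bool \<times> 'a" where "flp u = (\<not> fst u, snd u)"

theorem lemma5p6: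
  fixes X :: "'a topology" and d :: "'a \<Rightarrow> 'a \<Rightarrow> ennreal"
    and \<gamma> :: "(bool \<times> 'a) \<Rightarrow> (bool \<times> 'a) \<Rightarrow> ennreal"
  assumes "sep_metric_CH X d"
    and "binary_cont_submetric X d \<gamma>"
  shows "symmetric_submetric X \<gamma> \<longleftrightarrow>
    (\<forall>x\<in>topspace X. \<forall>y\<in>topspace X. \<forall>i j. \<gamma> (i, x) (j, y) = \<gamma> (\<not> i, x) (\<not> j, y))"
proof -
  have m: "is_metric_on (topspace (coprod_top X)) \<gamma>"
    using assms(2) by (simp add: binary_cont_submetric_def)
  have cm: "corel_metric \<gamma> (corel_q X \<gamma> i x) (corel_q X \<gamma> j y) = \<gamma> (i, x) (j, y)"
    if "x \<in> topspace X" "y \<in> topspace X" for i j x y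
    unfolding corel_q_def using that by (intro corel_metric_gcls[OF m]) (auto simp: top_coprod)
  have qs: "corel_q X \<gamma> i x \<in> corel_set X \<gamma>" if "x \<in> topspace X" for i x
    using that by (auto simp: corel_q_def corel_set_def top_coprod)
  show ?thesis
  proof
    assume "symmetric_submetric X \<gamma>"
    then obtain s where
      ne: "\<forall>A\<in>corel_set X \<gamma>. \<forall>B\<in>corel_set X \<gamma>. corel_metric \<gamma> (s A) (s B) \<le> corel_metric \<gamma> A B"
      and sq: "\<forall>x\<in>topspace X. s (corel_q X \<gamma> False x) = corel_q X \<gamma> True x \<and>
                           s (corel_q X \<gamma> True x) = corel_q X \<gamma> False x"
      unfolding symmetric_submetric_def by blast
    have sq': "s (corel_q X \<gamma> i x) = corel_q X \<gamma> (\<not> i) x" if "x \<in> topspace X" for i x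
      using sq that by (cases i) auto
    have le: "\<gamma> (\<not> i, x) (\<not> j, y) \<le> \<gamma> (i, x) (j, y)"
      if "x \<in> topspace X" "y \<in> topspace X" for i j x y
      using ne[rule_format, OF qs[OF that(1)] qs[OF that(2)], of i j]
      by (simp add: sq' that cm)
    show "\<forall>x\<in>topspace X. \<forall>y\<in>topspace X. \<forall>i j. \<gamma> (i, x) (j, y) = \<gamma> (\<not> i, x) (\<not> j, y)"
    proof (intro ballI allI)
      fix x y i j assume xy: "x \<in> topspace X" "y \<in> topspace X"
      show "\<gamma> (i, x) (j, y) = \<gamma> (\<not> i, x) (\<not> j, y)"
      proof -
        have a: "\<gamma> (\<not> i, x) (\<not> j, y) \<le> \<gamma> (i, x) (j, y)" using le[OF xy] .
        have b: "\<gamma> (i, x) (j, y) \<le> \<gamma> (\<not> i, x) (\<not> j, y)"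
          using le[OF xy, of "\<not> i" "\<not> j"] by (simp only: not_not)
        show ?thesis by (rule antisym[OF b a])
      qed
    qed
  next
    assume inv: "\<forall>x\<in>topspace X. \<forall>y\<in>topspace X. \<forall>i j. \<gamma> (i, x) (j, y) = \<gamma> (\<not> i, x) (\<not> j, y)"
    define s where "s = (\<lambda>A :: (bool \<times> 'a) set. flp ` A)"
    have inv': "\<gamma> (flp u) (flp v) = \<gamma> u v" if "u \<in> topspace (coprod_top X)" "v \<in> topspace (coprod_top X)" for u v
    proof -
      obtain i x where ux: "u = (i, x)" by (cases u)
      obtain j y where vy: "v = (j, y)" by (cases v)
      have "x \<in> topspace X" "y \<in> topspace X" using that ux vy by (auto simp: top_coprod)
      hence "\<gamma> (i, x) (j, y) = \<gamma> (\<not> i, x) (\<not> j, y)" using inv by blast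
      thus ?thesis by (simp add: ux vy flp_def)
    qed
    have flp_top: "flp u \<in> topspace (coprod_top X) \<longleftrightarrow> u \<in> topspace (coprod_top X)" for u
      by (cases u) (auto simp: flp_def top_coprod)
    have flpflp: "flp (flp u) = u" for u by (simp add: flp_def)
    have sg: "s (gcls X \<gamma> u) = gcls X \<gamma> (flp u)" if u: "u \<in> topspace (coprod_top X)" for u
    proof
      show "s (gcls X \<gamma> u) \<subseteq> gcls X \<gamma> (flp u)"
      proof
        fix w assume "w \<in> s (gcls X \<gamma> u)"
        then obtain v where wv: "w = flp v" and v: "v \<in> gcls X \<gamma> u" unfolding s_def by blast
        have vt: "v \<in> topspace (coprod_top X)" "\<gamma> u v = 0" "\<gamma> v u = 0" using v by (auto simp: gcls_def)
        show "w \<in> gcls X \<gamma> (flp u)" unfolding gcls_def wv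
          using vt u inv'[OF u vt(1)] inv'[OF vt(1) u] flp_top by simp
      qed
      show "gcls X \<gamma> (flp u) \<subseteq> s (gcls X \<gamma> u)"
      proof
        fix w assume w: "w \<in> gcls X \<gamma> (flp u)"
        have "flp w \<in> gcls X \<gamma> u"
          using w u inv'[of "flp u" w] inv'[of w "flp u"] flp_top
          unfolding gcls_def by (auto simp: flpflp)
        thus "w \<in> s (gcls X \<gamma> u)" unfolding s_def by (metis flpflp image_eqI)
      qed
    qed
    have ts: "topspace (corel_top X \<gamma>) = corel_set X \<gamma>"
      unfolding corel_top_def by (rule topspace_quot) (auto simp: corel_set_def)
    have cont: "continuous_map (corel_top X \<gamma>) (corel_top X \<gamma>) s"
      unfolding continuous_map_def
    proof (intro conjI allI impI)
      show "s \<in> topspace (corel_top X \<gamma>) \<rightarrow> topspace (corel_top X \<gamma>)"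
        unfolding ts corel_set_def using sg flp_top by auto
      fix U assume U: "openin (corel_top X \<gamma>) U"
      hence U1: "U \<subseteq> corel_set X \<gamma>" and
        U2: "openin (coprod_top X) {x \<in> topspace (coprod_top X). gcls X \<gamma> x \<in> U}"
        by (auto simp: corel_top_def openin_quot)
      have eq: "{x \<in> topspace (coprod_top X). gcls X \<gamma> x \<in> {A \<in> topspace (corel_top X \<gamma>). s A \<in> U}}
          = {x \<in> topspace (coprod_top X). gcls X \<gamma> (flp x) \<in> U}"
        using sg by (auto simp: ts corel_set_def)
      have "openin (coprod_top X) {x \<in> topspace (coprod_top X). gcls X \<gamma> (flp x) \<in> U}"
      proof -
        have ex: "{x. (i, x) \<in> {z \<in> topspace (coprod_top X). gcls X \<gamma> (flp z) \<in> U}}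
           = {x. (\<not> i, x) \<in> {z \<in> topspace (coprod_top X). gcls X \<gamma> z \<in> U}}" for i
          by (auto simp: top_coprod flp_def)
        show ?thesis using U2 unfolding coprod_top_def openin_sum_topology
          using ex[unfolded coprod_top_def] by (auto simp: flp_def)
      qed
      hence o: "openin (coprod_top X) {x \<in> topspace (coprod_top X). gcls X \<gamma> x \<in> {A \<in> topspace (corel_top X \<gamma>). s A \<in> U}}"
        by (simp only: eq)
      have oc: "openin (corel_top X \<gamma>) V \<longleftrightarrow> V \<subseteq> corel_set X \<gamma> \<and>
          openin (coprod_top X) {x \<in> topspace (coprod_top X). gcls X \<gamma> x \<in> V}" for V
        by (simp add: corel_top_def openin_quot)
      show "openin (corel_top X \<gamma>) {A \<in> topspace (corel_top X \<gamma>). s A \<in> U}"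
        unfolding oc
      proof
        show "{A \<in> topspace (corel_top X \<gamma>). s A \<in> U} \<subseteq> corel_set X \<gamma>" using ts by auto
      qed (rule o)
    qed
    have "corel_metric \<gamma> (s A) (s B) \<le> corel_metric \<gamma> A B"
      if "A \<in> corel_set X \<gamma>" "B \<in> corel_set X \<gamma>" for A B
      using that unfolding corel_set_def
      by (auto simp: sg corel_metric_gcls[OF m] flp_top inv')
    moreover have "s (corel_q X \<gamma> False x) = corel_q X \<gamma> True x \<and>
                           s (corel_q X \<gamma> True x) = corel_q X \<gamma> False x" if "x \<in> topspace X" for x
      using that by (simp add: corel_q_def sg top_coprod flp_def)
    ultimately show "symmetric_submetric X \<gamma>"
      unfolding symmetric_submetric_def using cont by blast
  qed
qed

end
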